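(* Let $n \ge 1$, let $C \in \mathbb{R}^{n\times n}$ be a real cost matrix, let $\eta > 0$, and set $K = \exp[-\eta C]$, i.e. $K_{ij} = e^{-\eta C_{ij}}$. Then: (i) the entropic Minimum Mean Cycle problem $$\min_{P \in \Delta_{n\times n} \,:\, P\mathbf{1} = P^T\mathbf{1}} \ \langle P, C\rangle + \frac{1}{\eta}\sum_{i,j} P_{ij}\log P_{ij}$$ has a unique minimizer $P^\star$; (ii) there exists a positive diagonal matrix $X$ such that $B = XKX^{-1}$ satisfies $B\mathbf{1} = B^T\mathbf{1}$, and for any such $X$ we have $P^\star = B / (\mathbf{1}^T B \mathbf{1})$.
   Context: $\Delta_{n\times n} = \{P \in \mathbb{R}^{n\times n}_{\ge 0} : \sum_{ij} P_{ij} = 1\}$; $\mathbf{1}$ is the all-ones vector; $\langle P, C\rangle = \sum_{ij} P_{ij}C_{ij}$; $0\log 0 = 0$. The Matrix Balancing problem for a positive matrix $K$ asks for a positive diagonal $X$ such that $P = XKX^{-1}$ has equal row and column sums, $P\mathbf{1} = P^T\mathbf{1}$. *)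

theory Defs
  imports "HOL-Analysis.Analysis"
begin

text \<open>Matrices are indexed by a finite type 'n (n = CARD('n) >= 1 automatically).\<close>

definition xlogx :: "real \<Rightarrow> real" where
  "xlogx t = (if t = 0 then 0 else t * ln t)"

definition row_sum :: "real^'n^'n \<Rightarrow> 'n \<Rightarrow> real" where
  "row_sum P i = (\<Sum>j\<in>UNIV. P $ i $ j)"

definition col_sum :: "real^'n^'n \<Rightarrow> 'n \<Rightarrow> real" where
  "col_sum P j = (\<Sum>i\<in>UNIV. P $ i $ j)"

definition total_sum :: "real^'n^'n \<Rightarrow> real" where
  "total_sum P = (\<Sum>i\<in>UNIV. \<Sum>j\<in>UNIV. P $ i $ j)"

definition simplex_mat :: "(real^'n^'n) set" where
  "simplex_mat = {P. (\<forall>i j. P $ i $ j \<ge> 0) \<and> total_sum P = 1}"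

definition balanced :: "real^'n^'n \<Rightarrow> bool" where
  "balanced P \<longleftrightarrow> (\<forall>i. row_sum P i = col_sum P i)"

definition frob_inner :: "real^'n^'n \<Rightarrow> real^'n^'n \<Rightarrow> real" where
  "frob_inner P C = (\<Sum>i\<in>UNIV. \<Sum>j\<in>UNIV. P $ i $ j * C $ i $ j)"

definition entropic_mmc_obj :: "real \<Rightarrow> real^'n^'n \<Rightarrow> real^'n^'n \<Rightarrow> real" where
  "entropic_mmc_obj \<eta> C P =
     frob_inner P C + (1 / \<eta>) * (\<Sum>i\<in>UNIV. \<Sum>j\<in>UNIV. xlogx (P $ i $ j))"

definition is_entropic_mmc_minimizer :: "real \<Rightarrow> real^'n^'n \<Rightarrow> real^'n^'n \<Rightarrow> bool" where
  "is_entropic_mmc_minimizer \<eta> C P \<longleftrightarrow>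
     P \<in> simplex_mat \<and> balanced P \<and>
     (\<forall>Q. Q \<in> simplex_mat \<and> balanced Q \<longrightarrow> entropic_mmc_obj \<eta> C P \<le> entropic_mmc_obj \<eta> C Q)"

definition gibbs_kernel :: "real \<Rightarrow> real^'n^'n \<Rightarrow> real^'n^'n" where
  "gibbs_kernel \<eta> C = (\<chi> i j. exp (- \<eta> * C $ i $ j))"

definition diag_mat :: "real^'n \<Rightarrow> real^'n^'n" where
  "diag_mat x = (\<chi> i j. if i = j then x $ i else 0)"

end

theory Submission
  imports Defs
begin


lemma diag_left: "(diag_mat x ** A) $ i $ j = x$i * A$i$j"
proof -
  have "(diag_mat x ** A) $ i $ j = (\<Sum>k\<in>UNIV. (if i = k then x$i else 0) * A$k$j)"
    by (simp add: matrix_matrix_mult_def diag_mat_def)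
  also have "\<dots> = (\<Sum>k\<in>UNIV. if k = i then x$i * A$i$j else 0)" by (intro sum.cong) auto
  also have "\<dots> = x$i * A$i$j" by (simp add: sum.delta)
  finally show ?thesis .
qed

lemma diag_right: "(A ** diag_mat x) $ i $ j = A$i$j * x$j"
proof -
  have "(A ** diag_mat x) $ i $ j = (\<Sum>k\<in>UNIV. A$i$k * (if k = j then x$k else 0))"
    by (simp add: matrix_matrix_mult_def diag_mat_def)
  also have "\<dots> = (\<Sum>k\<in>UNIV. if k = j then A$i$j * x$j else 0)" by (intro sum.cong) auto
  also have "\<dots> = A$i$j * x$j" by (simp add: sum.delta)
  finally show ?thesis .
qed

lemma diag_inv:
  fixes x :: "real^'n"
  assumes "\<forall>i. x $ i > 0"
  shows "matrix_inv (diag_mat x) = diag_mat (\<chi> i. 1 / x $ i)"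
proof -
  let ?A = "diag_mat x" and ?B = "diag_mat (\<chi> i. 1 / x $ i) :: real^'n^'n"
  have nz: "\<forall>i. x$i \<noteq> 0" using assms by (metis less_irrefl)
  have AB: "?A ** ?B = mat 1"
    by (simp only: vec_eq_iff diag_left) (use nz in \<open>auto simp: diag_mat_def mat_def\<close>)
  have BA: "?B ** ?A = mat 1"
    by (simp only: vec_eq_iff diag_right) (use nz in \<open>auto simp: diag_mat_def mat_def\<close>)
  have "?A ** matrix_inv ?A = mat 1 \<and> matrix_inv ?A ** ?A = mat 1"
    unfolding matrix_inv_def by (rule someI[where x="?B"]) (use AB BA in auto)
  then have "matrix_inv ?A = matrix_inv ?A ** (?A ** ?B)" using AB by simp
  also have "\<dots> = ?B" by (simp add: matrix_mul_assoc \<open>_ \<and> _\<close>)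
  finally show ?thesis .
qed

lemma entries:
  fixes x :: "real^'n" and K :: "real^'n^'n"
  assumes "\<forall>i. x $ i > 0"
  shows "(diag_mat x ** K ** matrix_inv (diag_mat x)) $ i $ j = x$i * K$i$j / x$j"
  unfolding diag_inv[OF assms] diag_right diag_left by simp



lemma phi_nonneg:
  fixes q p :: real
  assumes "q \<ge> 0" "p > 0"
  shows "xlogx q - q * ln p - q + p \<ge> 0"
    and "xlogx q - q * ln p - q + p = 0 \<Longrightarrow> q = p"
proof -
  have A: "xlogx q - q * ln p - q + p \<ge> 0 \<and> (xlogx q - q * ln p - q + p = 0 \<longrightarrow> q = p)"
  proof (cases "q = 0")
    case True then show ?thesis using assms by (simp add: xlogx_def)
  next
    case False
    then have q: "q > 0" using assms by simp
    have e: "xlogx q - q * ln p - q + p = q * (p/q - 1 - ln (p/q))"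
      using q assms by (simp add: xlogx_def ln_div field_simps)
    have "ln (p/q) \<le> p/q - 1" using q assms by (intro ln_le_minus_one) simp
    moreover have "ln (p/q) = p/q - 1 \<Longrightarrow> p/q = 1" using q assms
      by (intro ln_eq_minus_one) auto
    ultimately have h1: "p/q - 1 - ln (p/q) \<ge> 0" and h2: "p/q - 1 - ln (p/q) = 0 \<Longrightarrow> p = q"
      using q by auto
    show ?thesis unfolding e using q h1 h2 by (auto simp: mult_nonneg_nonneg)
  qed
  then show "xlogx q - q * ln p - q + p \<ge> 0"
    and "xlogx q - q * ln p - q + p = 0 \<Longrightarrow> q = p" by auto
qed

lemma obj_identity:
  fixes B C Q :: "real^'n^'n" and w :: "'n \<Rightarrow> real"
  assumes eta: "\<eta> > 0" and Bdef: "\<forall>i j. B$i$j = exp (w i - \<eta> * C$i$j - w j)"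
    and Q: "balanced Q" "total_sum Q = 1"
  shows "entropic_mmc_obj \<eta> C Q =
     (1/\<eta>) * ((\<Sum>i\<in>UNIV. \<Sum>j\<in>UNIV. xlogx (Q$i$j) - Q$i$j * ln (B$i$j / total_sum B))
      - ln (total_sum B))"
proof -
  let ?s = "total_sum B"
  have spos: "?s > 0" unfolding total_sum_def using Bdef
    by (intro sum_pos) auto
  have lnP: "ln (B$i$j / ?s) = w i - \<eta> * C$i$j - w j - ln ?s" for i j
    using spos Bdef by (simp add: ln_div)
  have Ceq: "C$i$j = (w i - w j - ln ?s - ln (B$i$j / ?s)) / \<eta>" for i j
    using lnP[of i j] eta by (simp add: field_simps)
  have r: "(\<Sum>i\<in>UNIV. \<Sum>j\<in>UNIV. Q$i$j * w i) = (\<Sum>i\<in>UNIV. w i * row_sum Q i)"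
    by (simp add: row_sum_def sum_distrib_left mult.commute)
  have c: "(\<Sum>i\<in>UNIV. \<Sum>j\<in>UNIV. Q$i$j * w j) = (\<Sum>j\<in>UNIV. w j * col_sum Q j)"
    by (subst sum.swap) (simp add: col_sum_def sum_distrib_left mult.commute)
  have bal: "(\<Sum>i\<in>UNIV. w i * row_sum Q i) = (\<Sum>j\<in>UNIV. w j * col_sum Q j)"
    using Q(1) by (simp add: balanced_def)
  have ts: "(\<Sum>i\<in>UNIV. \<Sum>j\<in>UNIV. Q$i$j * ln ?s) = ln ?s"
    using Q(2) by (simp add: total_sum_def sum_distrib_right[symmetric])
  have "frob_inner Q C = (1/\<eta>) * (\<Sum>i\<in>UNIV. \<Sum>j\<in>UNIV.
          Q$i$j * w i - Q$i$j * w j - Q$i$j * ln ?s - Q$i$j * ln (B$i$j / ?s))"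
    unfolding frob_inner_def Ceq by (simp add: sum_distrib_left field_simps)
  also have "\<dots> = (1/\<eta>) * (- ln ?s - (\<Sum>i\<in>UNIV. \<Sum>j\<in>UNIV. Q$i$j * ln (B$i$j / ?s)))"
    using r c bal ts by (simp add: sum_subtractf)
  finally show ?thesis unfolding entropic_mmc_obj_def using eta
    by (simp add: sum_subtractf field_simps)
qed

lemma opt:
  fixes B C :: "real^'n^'n" and w :: "'n \<Rightarrow> real"
  assumes eta: "\<eta> > 0" and Bdef: "\<forall>i j. B$i$j = exp (w i - \<eta> * C$i$j - w j)"
    and balB: "balanced B"
  shows "is_entropic_mmc_minimizer \<eta> C ((1 / total_sum B) *\<^sub>R B)
     \<and> (\<forall>Q. is_entropic_mmc_minimizer \<eta> C Q \<longrightarrow> Q = (1 / total_sum B) *\<^sub>R B)"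
proof -
  let ?s = "total_sum B"
  define P where "P = (1 / ?s) *\<^sub>R B"
  have spos: "?s > 0" unfolding total_sum_def using Bdef
    by (intro sum_pos) auto
  have Pij: "P$i$j = B$i$j / ?s" for i j by (simp add: P_def)
  have Ppos: "P$i$j > 0" for i j using Pij[of i j] spos Bdef by simp
  have tP: "total_sum P = 1" using spos
    by (simp add: total_sum_def Pij sum_divide_distrib[symmetric])
  have bP: "balanced P" using balB
    by (simp add: balanced_def row_sum_def col_sum_def Pij sum_divide_distrib[symmetric])
  have sP: "P \<in> simplex_mat" using Ppos tP by (auto simp: simplex_mat_def less_imp_le)
  have key: "entropic_mmc_obj \<eta> C Q - entropic_mmc_obj \<eta> C P =
      (1/\<eta>) * (\<Sum>i\<in>UNIV. \<Sum>j\<in>UNIV. xlogx (Q$i$j) - Q$i$j * ln (P$i$j) - Q$i$j + P$i$j)"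
    if Q: "balanced Q" "total_sum Q = 1" for Q
  proof -
    have x: "xlogx (P$i$j) = P$i$j * ln (P$i$j)" for i j using Ppos[of i j] by (simp add: xlogx_def)
    have sQ: "(\<Sum>i\<in>UNIV. \<Sum>j\<in>UNIV. Q$i$j) = 1" using Q(2) by (simp add: total_sum_def)
    have sPP: "(\<Sum>i\<in>UNIV. \<Sum>j\<in>UNIV. P$i$j) = 1" using tP by (simp add: total_sum_def)
    define SQ where "SQ = (\<Sum>i\<in>UNIV. \<Sum>j\<in>UNIV. xlogx (Q$i$j) - Q$i$j * ln (P$i$j))"
    have e2: "(\<Sum>i\<in>UNIV. \<Sum>j\<in>UNIV. xlogx (P$i$j) - P$i$j * ln (P$i$j)) = 0"
      by (simp add: x)
    have oQ: "entropic_mmc_obj \<eta> C Q = (1/\<eta>) * (SQ - ln ?s)"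
      unfolding obj_identity[OF eta Bdef Q] SQ_def Pij ..
    have oP: "entropic_mmc_obj \<eta> C P = (1/\<eta>) * (0 - ln ?s)"
      unfolding obj_identity[OF eta Bdef bP tP] Pij[symmetric] e2 ..
    have e1: "(\<Sum>i\<in>UNIV. \<Sum>j\<in>UNIV. xlogx (Q$i$j) - Q$i$j * ln (P$i$j) - Q$i$j + P$i$j)
        = SQ - (\<Sum>i\<in>UNIV. \<Sum>j\<in>UNIV. Q$i$j) + (\<Sum>i\<in>UNIV. \<Sum>j\<in>UNIV. P$i$j)"
      unfolding SQ_def by (simp only: sum.distrib sum_subtractf)
    have ar: "(1/\<eta>) * (a - l) - (1/\<eta>) * (0 - l) = (1/\<eta>) * (a - 1 + 1)" for a l :: real
      by (simp add: right_diff_distrib)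
    show ?thesis by (simp only: oQ oP e1 sQ sPP ar)
  qed
  have min: "is_entropic_mmc_minimizer \<eta> C P"
    unfolding is_entropic_mmc_minimizer_def
  proof (intro conjI sP bP allI impI)
    fix Q :: "real^'n^'n" assume "Q \<in> simplex_mat \<and> balanced Q"
    then have Q: "balanced Q" "total_sum Q = 1" "\<forall>i j. Q$i$j \<ge> 0" by (auto simp: simplex_mat_def)
    have "0 \<le> (\<Sum>i\<in>UNIV. \<Sum>j\<in>UNIV. xlogx (Q$i$j) - Q$i$j * ln (P$i$j) - Q$i$j + P$i$j)"
      using Q(3) Ppos by (intro sum_nonneg phi_nonneg(1)) auto
    then have "0 \<le> (1/\<eta>) * (\<Sum>i\<in>UNIV. \<Sum>j\<in>UNIV. xlogx (Q$i$j) - Q$i$j * ln (P$i$j) - Q$i$j + P$i$j)"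
      using eta by simp
    then show "entropic_mmc_obj \<eta> C P \<le> entropic_mmc_obj \<eta> C Q"
      using key[OF Q(1,2)] by linarith
  qed
  have uniq: "Q = P" if mQ: "is_entropic_mmc_minimizer \<eta> C Q" for Q :: "real^'n^'n"
  proof -
    from mQ have q1: "Q \<in> simplex_mat" and q2: "balanced Q"
      and q3: "\<forall>R. R \<in> simplex_mat \<and> balanced R \<longrightarrow> entropic_mmc_obj \<eta> C Q \<le> entropic_mmc_obj \<eta> C R"
      unfolding is_entropic_mmc_minimizer_def by blast+
    have le: "entropic_mmc_obj \<eta> C Q \<le> entropic_mmc_obj \<eta> C P" using q3 sP bP by blast
    have Q: "balanced Q" "total_sum Q = 1" "\<forall>i j. Q$i$j \<ge> 0"
      using q1 q2 unfolding simplex_mat_def by blast+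
    define \<phi> where "\<phi> i j = xlogx (Q$i$j) - Q$i$j * ln (P$i$j) - Q$i$j + P$i$j" for i j :: 'n
    have nn: "\<phi> i j \<ge> 0" for i j unfolding \<phi>_def using Q(3) Ppos by (intro phi_nonneg(1)) auto
    have h0: "(1/\<eta>) * (\<Sum>i\<in>UNIV. \<Sum>j\<in>UNIV. \<phi> i j) \<le> 0"
      using key[OF Q(1,2)] le unfolding \<phi>_def by linarith
    have "\<eta> * ((1/\<eta>) * (\<Sum>i\<in>UNIV. \<Sum>j\<in>UNIV. \<phi> i j)) \<le> 0"
      by (rule mult_nonneg_nonpos[OF _ h0]) (use eta in simp)
    moreover have "\<eta> * ((1/\<eta>) * (\<Sum>i\<in>UNIV. \<Sum>j\<in>UNIV. \<phi> i j)) = (\<Sum>i\<in>UNIV. \<Sum>j\<in>UNIV. \<phi> i j)"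
      using eta by simp
    ultimately have "(\<Sum>i\<in>UNIV. \<Sum>j\<in>UNIV. \<phi> i j) \<le> 0" by linarith
    moreover have "(\<Sum>i\<in>UNIV. \<Sum>j\<in>UNIV. \<phi> i j) \<ge> 0" using nn by (intro sum_nonneg) auto
    ultimately have "(\<Sum>i\<in>UNIV. \<Sum>j\<in>UNIV. \<phi> i j) = 0" by linarith
    moreover have "(\<Sum>i\<in>UNIV. \<Sum>j\<in>UNIV. \<phi> i j) = 0 \<longleftrightarrow> (\<forall>i\<in>UNIV. (\<Sum>j\<in>UNIV. \<phi> i j) = 0)"
      by (rule sum_nonneg_eq_0_iff) (auto intro: sum_nonneg nn)
    ultimately have r: "(\<Sum>j\<in>UNIV. \<phi> i j) = 0" for i by blast
    have "(\<Sum>j\<in>UNIV. \<phi> i j) = 0 \<longleftrightarrow> (\<forall>j\<in>UNIV. \<phi> i j = 0)" for i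
      by (rule sum_nonneg_eq_0_iff) (auto intro: nn)
    then have z: "\<phi> i j = 0" for i j using r by blast
    have "Q$i$j = P$i$j" for i j
    proof -
      have zz: "xlogx (Q$i$j) - Q$i$j * ln (P$i$j) - Q$i$j + P$i$j = 0"
        using z[of i j] unfolding \<phi>_def .
      have "0 \<le> Q$i$j" using Q(3) by blast
      from phi_nonneg(2)[OF this Ppos[of i j] zz] show ?thesis .
    qed
    then show ?thesis by (simp add: vec_eq_iff)
  qed
  show ?thesis using min uniq unfolding P_def by blast
qed



lemma term_le_dsum:
  fixes f :: "'n::finite \<Rightarrow> 'n \<Rightarrow> real"
  assumes "\<And>i j. f i j \<ge> 0"
  shows "f i j \<le> (\<Sum>a\<in>UNIV. \<Sum>b\<in>UNIV. f a b)"
proof -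
  have "f i j \<le> (\<Sum>b\<in>UNIV. f i b)" using assms by (intro member_le_sum) auto
  also have "\<dots> \<le> (\<Sum>a\<in>UNIV. \<Sum>b\<in>UNIV. f a b)" using assms
    by (intro member_le_sum) (auto intro: sum_nonneg)
  finally show ?thesis .
qed

lemma dsum_delta:
  fixes f :: "'n::finite \<Rightarrow> 'n \<Rightarrow> real"
  shows "(\<Sum>i\<in>UNIV. \<Sum>j\<in>UNIV. f i j * ((if i = k then 1 else 0) - (if j = k then 1 else 0)))
     = (\<Sum>j\<in>UNIV. f k j) - (\<Sum>i\<in>UNIV. f i k)"
proof -
  have "(\<Sum>i\<in>UNIV. \<Sum>j\<in>UNIV. f i j * (if i = k then 1 else 0))
      = (\<Sum>i\<in>UNIV. if i = k then (\<Sum>j\<in>UNIV. f i j) else 0)"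
    by (intro sum.cong) auto
  also have "\<dots> = (\<Sum>j\<in>UNIV. f k j)" by (simp add: sum.delta)
  finally have 1: "(\<Sum>i\<in>UNIV. \<Sum>j\<in>UNIV. f i j * (if i = k then 1 else 0)) = (\<Sum>j\<in>UNIV. f k j)" .
  have "(\<Sum>i\<in>UNIV. \<Sum>j\<in>UNIV. f i j * (if j = k then 1 else 0))
      = (\<Sum>i\<in>UNIV. \<Sum>j\<in>UNIV. if j = k then f i j else 0)"
    by (intro sum.cong) auto
  also have "\<dots> = (\<Sum>i\<in>UNIV. f i k)" by (simp add: sum.delta)
  finally have 2: "(\<Sum>i\<in>UNIV. \<Sum>j\<in>UNIV. f i j * (if j = k then 1 else 0)) = (\<Sum>i\<in>UNIV. f i k)" .
  show ?thesis
    by (simp only: right_diff_distrib sum_subtractf 1 2)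
qed

lemma deriv_dsum:
  fixes K a c :: "'n::finite \<Rightarrow> 'n \<Rightarrow> real"
  shows "((\<lambda>t. \<Sum>i\<in>UNIV. \<Sum>j\<in>UNIV. K i j * exp (a i j + t * c i j)) has_real_derivative
     (\<Sum>i\<in>UNIV. \<Sum>j\<in>UNIV. K i j * exp (a i j) * c i j)) (at 0)"
  by (auto intro!: derivative_eq_intros sum.cong)

lemma exist_balance:
  fixes K :: "real^'n^'n"
  assumes Kpos: "\<forall>i j. K$i$j > 0"
  shows "\<exists>u :: real^'n. balanced (\<chi> i j. K$i$j * exp (u$i - u$j))"
proof -
  define F where "F u = (\<Sum>i\<in>UNIV. \<Sum>j\<in>UNIV. K$i$j * exp (u$i - u$j))" for u :: "real^'n"
  define M where "M = F 0"
  define R where "R = (\<Sum>i\<in>UNIV. \<Sum>j\<in>UNIV. \<bar>ln (M / K$i$j)\<bar>)"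
  have Rnn: "R \<ge> 0" unfolding R_def by (intro sum_nonneg) auto
  have bound: "u$i - u$j \<le> R" if "F u \<le> M" for u i j
  proof -
    have "K$i$j * exp (u$i - u$j) \<le> F u" unfolding F_def
      by (rule term_le_dsum[where f="\<lambda>i j. K$i$j * exp (u$i - u$j)"]) (metis Kpos exp_gt_zero less_imp_le mult_pos_pos)
    then have "exp (u$i - u$j) \<le> M / K$i$j" using that Kpos
      by (simp add: field_simps mult.commute)
    then have "u$i - u$j \<le> ln (M / K$i$j)"
      by (metis exp_gt_zero ln_exp ln_le_cancel_iff order_less_le_trans)
    also have "\<dots> \<le> \<bar>ln (M / K$i$j)\<bar>" by simp
    also have "\<dots> \<le> R" unfolding R_def
      by (rule term_le_dsum[where f="\<lambda>i j. \<bar>ln (M / K$i$j)\<bar>"]) auto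
    finally show ?thesis .
  qed
  define T where "T = cbox (- (\<chi> i. R)) (\<chi> i. R :: real^'n)"
  have "compact T" unfolding T_def by simp
  moreover have "0 \<in> T" unfolding T_def mem_box_cart using Rnn by simp
  moreover have "continuous_on T F" unfolding F_def by (intro continuous_intros)
  ultimately obtain u where uT: "u \<in> T" and umin: "\<forall>v\<in>T. F u \<le> F v"
    using continuous_attains_inf[of T F] by blast
  have glob: "F u \<le> F v" for v
  proof (cases "F v \<le> M")
    case False then show ?thesis using umin \<open>0 \<in> T\<close> unfolding M_def by force
  next
    case True
    define v' where "v' = (\<chi> i. v$i - v$(undefined::'n))"
    have "F v' = F v" unfolding F_def v'_def by simp
    moreover have "v' \<in> T"
    proof -
      have "-R \<le> v$i - v$(undefined::'n) \<and> v$i - v$(undefined::'n) \<le> R" for i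
        using bound[OF True, of undefined i] bound[OF True, of i undefined] by linarith
      then show ?thesis unfolding T_def mem_box_cart v'_def by simp
    qed
    ultimately show ?thesis using umin by metis
  qed
  define B where "B = (\<chi> i j. K$i$j * exp (u$i - u$j) :: real^'n^'n)"
  have "row_sum B k = col_sum B k" for k
  proof -
    define g where "g t = (\<Sum>i\<in>UNIV. \<Sum>j\<in>UNIV. K$i$j * exp ((u$i - u$j) + t *
       ((if i = k then 1 else 0) - (if j = k then 1 else 0))))" for t :: real
    have gF: "g t = F (\<chi> i. u$i + (if i = k then t else 0))" for t
      unfolding g_def F_def by (intro sum.cong refl) (auto simp: algebra_simps)
    have D: "(g has_real_derivative (\<Sum>i\<in>UNIV. \<Sum>j\<in>UNIV. K$i$j * exp (u$i - u$j) *
       ((if i = k then 1 else 0) - (if j = k then 1 else 0)))) (at 0)"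
      unfolding g_def[abs_def] by (rule deriv_dsum)
    have "g 0 = F u" unfolding g_def F_def by simp
    then have "\<forall>y. \<bar>0 - y\<bar> < 1 \<longrightarrow> g 0 \<le> g y" using glob gF by metis
    then have z: "(\<Sum>i\<in>UNIV. \<Sum>j\<in>UNIV. K$i$j * exp (u$i - u$j) *
       ((if i = k then 1 else 0) - (if j = k then 1 else 0))) = 0"
      using DERIV_local_min[OF D, of 1] by simp
    have "(\<Sum>i\<in>UNIV. \<Sum>j\<in>UNIV. K$i$j * exp (u$i - u$j) *
       ((if i = k then 1 else 0) - (if j = k then 1 else 0))) = row_sum B k - col_sum B k"
      unfolding row_sum_def col_sum_def B_def vec_lambda_beta
      by (rule dsum_delta[where f="\<lambda>i j. K$i$j * exp (u$i - u$j)"])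
    then show ?thesis using z by simp
  qed
  then show ?thesis unfolding balanced_def B_def by blast
qed


theorem lemma2:
  fixes C :: "real^'n^'n" and \<eta> :: real
  assumes "\<eta> > 0"
  shows "\<exists>Pstar. is_entropic_mmc_minimizer \<eta> C Pstar
           \<and> (\<forall>Q. is_entropic_mmc_minimizer \<eta> C Q \<longrightarrow> Q = Pstar)
           \<and> (\<exists>x :: real^'n. (\<forall>i. x $ i > 0) \<and>
                balanced (diag_mat x ** gibbs_kernel \<eta> C ** matrix_inv (diag_mat x)))
           \<and> (\<forall>x :: real^'n. (\<forall>i. x $ i > 0) \<and>
                balanced (diag_mat x ** gibbs_kernel \<eta> C ** matrix_inv (diag_mat x)) \<longrightarrow>
                Pstar = (1 / total_sum (diag_mat x ** gibbs_kernel \<eta> C ** matrix_inv (diag_mat x)))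
                          *\<^sub>R (diag_mat x ** gibbs_kernel \<eta> C ** matrix_inv (diag_mat x)))"
proof -
  let ?K = "gibbs_kernel \<eta> C"
  let ?B = "\<lambda>x. diag_mat x ** ?K ** matrix_inv (diag_mat x)"
  have Kpos: "\<forall>i j. ?K$i$j > 0" by (simp add: gibbs_kernel_def)
  obtain u :: "real^'n" where bu: "balanced (\<chi> i j. ?K$i$j * exp (u$i - u$j))"
    using exist_balance[OF Kpos] by blast
  define x0 where "x0 = (\<chi> i. exp (u$i))"
  have x0pos: "\<forall>i. x0$i > 0" by (simp add: x0_def)
  have "?B x0 = (\<chi> i j. ?K$i$j * exp (u$i - u$j))"
    unfolding vec_eq_iff by (simp only: entries[OF x0pos] vec_lambda_beta) (simp add: x0_def exp_diff)
  then have bx0: "balanced (?B x0)" using bu by simp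
  have gen: "is_entropic_mmc_minimizer \<eta> C ((1 / total_sum (?B x)) *\<^sub>R ?B x)
     \<and> (\<forall>Q. is_entropic_mmc_minimizer \<eta> C Q \<longrightarrow> Q = (1 / total_sum (?B x)) *\<^sub>R ?B x)"
    if xp: "\<forall>i. x$i > 0" and bal: "balanced (?B x)" for x :: "real^'n"
  proof (rule opt[OF assms _ bal, where w="\<lambda>i. ln (x$i)"], intro allI)
    fix i j
    show "?B x $ i $ j = exp (ln (x$i) - \<eta> * C$i$j - ln (x$j))"
    proof -
      have "?B x $ i $ j = x$i * exp (- (\<eta> * C$i$j)) / x$j"
        by (simp add: entries[OF xp] gibbs_kernel_def)
      also have "\<dots> = exp (ln (x$i) - \<eta> * C$i$j - ln (x$j))"
        using xp[rule_format, of i] xp[rule_format, of j]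
        by (simp add: exp_diff exp_minus divide_inverse)
      finally show ?thesis .
    qed
  qed
  define P where "P = (1 / total_sum (?B x0)) *\<^sub>R ?B x0"
  have mP: "is_entropic_mmc_minimizer \<eta> C P" and uP: "\<forall>Q. is_entropic_mmc_minimizer \<eta> C Q \<longrightarrow> Q = P"
    using gen[OF x0pos bx0] unfolding P_def by blast+
  show ?thesis
  proof (intro exI[of _ P] conjI mP uP allI impI)
    show "\<exists>x :: real^'n. (\<forall>i. x $ i > 0) \<and> balanced (?B x)" using x0pos bx0 by blast
  next
    fix x :: "real^'n" assume "(\<forall>i. x $ i > 0) \<and> balanced (?B x)"
    then have "is_entropic_mmc_minimizer \<eta> C ((1 / total_sum (?B x)) *\<^sub>R ?B x)"
      using gen by blast
    then show "P = (1 / total_sum (?B x)) *\<^sub>R ?B x" using uP by metis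
  qed
qed

end
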